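(* For $[0,1]$ valuation functions, there is an absolute constant $c>0$ such that for every $n\ge1$, random priority on $n$ agents and $n$ items satisfies $ar(RP)\ge c/\sqrt n$.
   Context: Agents $N=\{1,\dots,n\}$, items $M=\{1,\dots,n\}$, outcomes are bijections $\mu$ ($O$ the set of outcomes). A $[0,1]$ valuation function is an injective $u_i:M\to[0,1]$ with $\max_j u_i(j)=1$ (the minimum need not be $0$); $V^n$ is the set of profiles of such functions. Random priority (RP) picks a uniformly random ordering of the agents and in that order gives each agent its most preferred still-unassigned item. $ar(J)=\inf_{\mathbf u\in V^n}\mathbb E[\sum_i u_i(J(\mathbf u)_i)]/\max_{\mu\in O}\sum_i u_i(\mu_i)$. *)

theory Defs
  imports Complex_Main
begin

text \<open>Agents and items are both indexed by {..<n} (i.e. 0,...,n-1).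
 A valuation profile is u :: nat => nat => real, with u i j the value of agent i for item j.\<close>

definition valuation :: "nat \<Rightarrow> (nat \<Rightarrow> real) \<Rightarrow> bool" where
  "valuation n v \<longleftrightarrow> inj_on v {..<n} \<and> (\<forall>j<n. 0 \<le> v j \<and> v j \<le> 1)
     \<and> (\<exists>j<n. v j = 1)"

definition profiles :: "nat \<Rightarrow> (nat \<Rightarrow> nat \<Rightarrow> real) set" where
  "profiles n = {u. \<forall>i<n. valuation n (u i)}"

definition outcomes :: "nat \<Rightarrow> (nat \<Rightarrow> nat) set" where
  "outcomes n = {\<mu>. bij_betw \<mu> {..<n} {..<n}}"

definition welfare :: "nat \<Rightarrow> (nat \<Rightarrow> nat \<Rightarrow> real) \<Rightarrow> (nat \<Rightarrow> nat) \<Rightarrow> real" where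
  "welfare n u \<mu> = (\<Sum>i<n. u i (\<mu> i))"

definition opt_welfare :: "nat \<Rightarrow> (nat \<Rightarrow> nat \<Rightarrow> real) \<Rightarrow> real" where
  "opt_welfare n u = Max (welfare n u ` outcomes n)"

fun serial_dict :: "(nat \<Rightarrow> nat \<Rightarrow> real) \<Rightarrow> nat set \<Rightarrow> nat list \<Rightarrow> (nat \<Rightarrow> nat) \<Rightarrow> (nat \<Rightarrow> nat)" where
  "serial_dict u avail [] \<mu> = \<mu>"
| "serial_dict u avail (i # is) \<mu> =
     (let j = (ARG_MAX (u i) j. j \<in> avail) in serial_dict u (avail - {j}) is (\<mu>(i := j)))"

definition orderings :: "nat \<Rightarrow> nat list set" where
  "orderings n = {xs. distinct xs \<and> set xs = {..<n}}"

definition RP :: "nat \<Rightarrow> (nat \<Rightarrow> nat \<Rightarrow> real) \<Rightarrow> nat list \<Rightarrow> (nat \<Rightarrow> nat)" where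
  "RP n u \<sigma> = serial_dict u {..<n} \<sigma> id"

definition RP_expected_welfare :: "nat \<Rightarrow> (nat \<Rightarrow> nat \<Rightarrow> real) \<Rightarrow> real" where
  "RP_expected_welfare n u =
     (\<Sum>\<sigma>\<in>orderings n. welfare n u (RP n u \<sigma>)) / real (card (orderings n))"

definition approx_ratio_RP :: "nat \<Rightarrow> real" where
  "approx_ratio_RP n = (INF u\<in>profiles n. RP_expected_welfare n u / opt_welfare n u)"

end

theory Submission imports Defs begin

lemma argmax_fin:
  fixes f :: "nat \<Rightarrow> real"
  assumes "finite S" "S \<noteq> {}"
  shows "(ARG_MAX f j. j \<in> S) \<in> S \<and> (\<forall>y\<in>S. f y \<le> f (ARG_MAX f j. j \<in> S))"
proof -
  obtain x where x: "x \<in> S" "f x = Max (f ` S)"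
    using assms by (metis (mono_tags, lifting) Max_in finite_imageI image_iff image_is_empty)
  have "is_arg_max f (\<lambda>j. j \<in> S) x"
    using x assms by (auto simp: is_arg_max_linorder)
  then have "is_arg_max f (\<lambda>j. j \<in> S) (ARG_MAX f j. j \<in> S)"
    unfolding arg_max_def by (rule someI)
  then show ?thesis by (auto simp: is_arg_max_linorder)
qed

fun avail_after :: "(nat \<Rightarrow> nat \<Rightarrow> real) \<Rightarrow> nat set \<Rightarrow> nat list \<Rightarrow> nat set" where
  "avail_after u A [] = A"
| "avail_after u A (i # is) = avail_after u (A - {ARG_MAX (u i) j. j \<in> A}) is"

lemma sd_append:
  "serial_dict u A (xs @ ys) \<mu> = serial_dict u (avail_after u A xs) ys (serial_dict u A xs \<mu>)"
  by (induction xs arbitrary: A \<mu>) (auto simp: Let_def)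

lemma sd_notin: "i \<notin> set xs \<Longrightarrow> serial_dict u A xs \<mu> i = \<mu> i"
  by (induction xs arbitrary: A \<mu>) (auto simp: Let_def)

lemma sd_at: "i \<notin> set post \<Longrightarrow>
   serial_dict u A (pre @ i # post) \<mu> i = (ARG_MAX (u i) j. j \<in> avail_after u A pre)"
  by (simp add: sd_append sd_notin Let_def)

lemma avail_sub: "avail_after u A xs \<subseteq> A"
  by (induction xs arbitrary: A) (simp, fastforce)

lemma avail_append: "avail_after u A (xs @ ys) = avail_after u (avail_after u A xs) ys"
  by (induction xs arbitrary: A) auto

lemma avail_card: "finite A \<Longrightarrow> card (avail_after u A xs) + length xs \<ge> card A"
proof (induction xs arbitrary: A)
  case Nil then show ?case by simp
next
  case (Cons i xs)
  let ?B = "A - {ARG_MAX (u i) j. j \<in> A}"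
  have "card ?B + 1 \<ge> card A" using Cons.prems
    by (metis card_Diff_singleton_if add.commute nat_le_linear not_less_eq_eq plus_1_eq_Suc card.remove)
  moreover have "card (avail_after u ?B xs) + length xs \<ge> card ?B" using Cons by auto
  ultimately show ?case by simp
qed

lemma avail_mono_take: "q \<le> m \<Longrightarrow> avail_after u A (take m xs) \<subseteq> avail_after u A (take q xs)"
proof -
  assume "q \<le> m"
  then have "take m xs = take q xs @ take (m - q) (drop q xs)"
    by (metis le_add_diff_inverse take_add)
  then show ?thesis by (simp add: avail_append avail_sub)
qed

fun idx :: "nat list \<Rightarrow> nat \<Rightarrow> nat" where
  "idx [] x = 0"
| "idx (y # ys) x = (if y = x then 0 else Suc (idx ys x))"

lemma idx_less: "x \<in> set xs \<Longrightarrow> idx xs x < length xs"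
  by (induction xs) auto

lemma nth_idx: "x \<in> set xs \<Longrightarrow> xs ! idx xs x = x"
  by (induction xs) auto

lemma idx_append: "idx (xs @ ys) x = (if x \<in> set xs then idx xs x else length xs + idx ys x)"
  by (induction xs) auto

lemma ord_len: "\<sigma> \<in> orderings n \<Longrightarrow> length \<sigma> = n"
  using distinct_card[of \<sigma>] by (auto simp: orderings_def)

lemma rp_val:
  fixes u :: "nat \<Rightarrow> nat \<Rightarrow> real"
  assumes "\<sigma> \<in> orderings n" "i < n"
  defines "S \<equiv> avail_after u {..<n} (take (idx \<sigma> i) \<sigma>)"
  shows "RP n u \<sigma> i \<in> S \<and> (\<forall>y\<in>S. u i y \<le> u i (RP n u \<sigma> i))"
proof -
  let ?q = "idx \<sigma> i"
  have d: "distinct \<sigma>" and st: "set \<sigma> = {..<n}" using assms(1) by (auto simp: orderings_def)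
  have len: "length \<sigma> = n" using ord_len[OF assms(1)] .
  have iin: "i \<in> set \<sigma>" using st assms(2) by auto
  have q: "?q < n" using iin len by (metis idx_less)
  have dec: "\<sigma> = take ?q \<sigma> @ i # drop (Suc ?q) \<sigma>"
  proof -
    have "\<sigma> = take ?q \<sigma> @ \<sigma> ! ?q # drop (Suc ?q) \<sigma>"
      by (rule id_take_nth_drop) (use iin idx_less in blast)
    then show ?thesis unfolding nth_idx[OF iin] .
  qed
  have nin: "i \<notin> set (drop (Suc ?q) \<sigma>)"
  proof -
    have "distinct (take ?q \<sigma> @ i # drop (Suc ?q) \<sigma>)" using dec d by (rule subst[where P=distinct])
    then show ?thesis by simp
  qed
  have rp: "RP n u \<sigma> i = (ARG_MAX (u i) j. j \<in> S)"
  proof -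
    have "serial_dict u {..<n} \<sigma> id i = serial_dict u {..<n} (take ?q \<sigma> @ i # drop (Suc ?q) \<sigma>) id i"
      by (rule arg_cong[where f="\<lambda>s. serial_dict u {..<n} s id i", OF dec])
    also have "\<dots> = (ARG_MAX (u i) j. j \<in> S)" unfolding S_def by (rule sd_at[OF nin])
    finally show ?thesis unfolding RP_def .
  qed
  have fin: "finite S" unfolding S_def by (meson avail_sub finite_lessThan finite_subset)
  have "card S + ?q \<ge> n" unfolding S_def using avail_card[of "{..<n}" u "take ?q \<sigma>"] q by simp
  then have "S \<noteq> {}" using q by auto
  then show ?thesis using argmax_fin[OF fin] rp by simp
qed

definition ins :: "nat \<Rightarrow> nat \<Rightarrow> nat list \<Rightarrow> nat list" where
  "ins i q \<tau> = take q \<tau> @ i # drop q \<tau>"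

definition Qs :: "nat \<Rightarrow> nat \<Rightarrow> nat list set" where
  "Qs n i = {\<tau>. distinct \<tau> \<and> set \<tau> = {..<n} - {i}}"

lemma Qs_fin: "finite (Qs n i)"
proof -
  have "Qs n i \<subseteq> {xs. set xs \<subseteq> {..<n} \<and> distinct xs}" unfolding Qs_def by auto
  then show ?thesis using finite_subset_distinct[of "{..<n}"] finite_subset by blast
qed

lemma Qs_len: "i < n \<Longrightarrow> \<tau> \<in> Qs n i \<Longrightarrow> length \<tau> = n - 1"
  unfolding Qs_def using distinct_card[of \<tau>] by auto

lemma idx_ins: "i \<notin> set \<tau> \<Longrightarrow> q \<le> length \<tau> \<Longrightarrow> idx (ins i q \<tau>) i = q"
proof -
  assume a: "i \<notin> set \<tau>" "q \<le> length \<tau>"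
  then have "i \<notin> set (take q \<tau>)" by (meson in_set_takeD)
  then show ?thesis using a unfolding ins_def by (simp add: idx_append)
qed

lemma filter_ins: "i \<notin> set \<tau> \<Longrightarrow> filter (\<lambda>x. x \<noteq> i) (ins i q \<tau>) = \<tau>"
proof -
  assume a: "i \<notin> set \<tau>"
  then have "filter (\<lambda>x. x \<noteq> i) \<tau> = \<tau>" by (induction \<tau>) auto
  then have A: "filter (\<lambda>x. x \<noteq> i) (take q \<tau>) @ filter (\<lambda>x. x \<noteq> i) (drop q \<tau>) = \<tau>"
    by (metis filter_append append_take_drop_id)
  show ?thesis unfolding ins_def using A by simp
qed

lemma take_ins: "m \<le> q \<Longrightarrow> q \<le> length \<tau> \<Longrightarrow> take m (ins i q \<tau>) = take m \<tau>"
  unfolding ins_def by (simp add: min_def)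

lemma ord_split:
  assumes "i < n"
  shows "(\<Sum>\<sigma>\<in>orderings n. h \<sigma>) = (\<Sum>\<tau>\<in>Qs n i. \<Sum>q<n. h (ins i q \<tau>))"
proof -
  let ?f = "\<lambda>(\<tau>, q). ins i q \<tau>"
  have inj: "inj_on ?f (Qs n i \<times> {..<n})"
  proof (rule inj_onI, clarsimp)
    fix \<tau> q \<tau>' q'
    assume t: "\<tau> \<in> Qs n i" "q < n" "\<tau>' \<in> Qs n i" "q' < n" and e: "ins i q \<tau> = ins i q' \<tau>'"
    have ni: "i \<notin> set \<tau>" "i \<notin> set \<tau>'" using t unfolding Qs_def by auto
    have l: "length \<tau> = n - 1" "length \<tau>' = n - 1" using t Qs_len assms by auto
    have "q = q'" proof -
      have "q = idx (ins i q \<tau>) i" using idx_ins[OF ni(1), of q] l t by simp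
      also have "\<dots> = idx (ins i q' \<tau>') i" using e by simp
      also have "\<dots> = q'" using idx_ins[OF ni(2), of q'] l t by simp
      finally show ?thesis .
    qed
    moreover have "\<tau> = \<tau>'" proof -
      have "\<tau> = filter (\<lambda>x. x \<noteq> i) (ins i q \<tau>)" using filter_ins[OF ni(1)] by simp
      also have "\<dots> = filter (\<lambda>x. x \<noteq> i) (ins i q' \<tau>')" using e by simp
      also have "\<dots> = \<tau>'" using filter_ins[OF ni(2)] by simp
      finally show ?thesis .
    qed
    ultimately show "\<tau> = \<tau>' \<and> q = q'" by simp
  qed
  have img: "?f ` (Qs n i \<times> {..<n}) = orderings n"
  proof
    show "?f ` (Qs n i \<times> {..<n}) \<subseteq> orderings n"
    proof clarsimp
      fix \<tau> q assume t: "\<tau> \<in> Qs n i" "q < n"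
      have d: "distinct \<tau>" and st: "set \<tau> = {..<n} - {i}" using t unfolding Qs_def by auto
      have d1: "distinct (take q \<tau>)" "distinct (drop q \<tau>)" using d by auto
      have d2: "set (take q \<tau>) \<inter> set (drop q \<tau>) = {}"
        using d by (rule set_take_disj_set_drop_if_distinct) simp
      have ni: "i \<notin> set (take q \<tau>)" "i \<notin> set (drop q \<tau>)"
        using st by (metis Diff_iff in_set_takeD singletonI, metis Diff_iff in_set_dropD singletonI)
      have "distinct (take q \<tau> @ i # drop q \<tau>)" using d1 d2 ni by simp
      moreover have "set (take q \<tau> @ i # drop q \<tau>) = {..<n}"
      proof -
        have eq: "set (take q \<tau>) \<union> set (drop q \<tau>) = set \<tau>" by (metis append_take_drop_id set_append)
        have "set (take q \<tau> @ i # drop q \<tau>) = insert i (set \<tau>)" using eq by auto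
        also have "\<dots> = {..<n}" using st assms by auto
        finally show ?thesis .
      qed
      ultimately show "ins i q \<tau> \<in> orderings n" unfolding ins_def orderings_def by simp
    qed
  next
    show "orderings n \<subseteq> ?f ` (Qs n i \<times> {..<n})"
    proof
      fix \<sigma> assume s: "\<sigma> \<in> orderings n"
      have d: "distinct \<sigma>" and st: "set \<sigma> = {..<n}" using s by (auto simp: orderings_def)
      have len: "length \<sigma> = n" using ord_len[OF s] .
      have iin: "i \<in> set \<sigma>" using st assms by auto
      define q where "q = idx \<sigma> i"
      have q: "q < n" using iin len idx_less q_def by metis
      have dec: "\<sigma> = take q \<sigma> @ i # drop (Suc q) \<sigma>"
      proof -
        have "\<sigma> = take q \<sigma> @ \<sigma> ! q # drop (Suc q) \<sigma>"
          by (rule id_take_nth_drop) (use iin idx_less q_def in blast)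
        then show ?thesis unfolding q_def nth_idx[OF iin] .
      qed
      have dd: "distinct (take q \<sigma> @ i # drop (Suc q) \<sigma>)" using dec d by (rule subst[where P=distinct])
      define \<tau> where "\<tau> = take q \<sigma> @ drop (Suc q) \<sigma>"
      have ltq: "length (take q \<sigma>) = q" using q len by simp
      have e: "ins i q \<tau> = take q \<sigma> @ i # drop (Suc q) \<sigma>"
        unfolding ins_def \<tau>_def using ltq by simp
      have "\<tau> \<in> Qs n i"
      proof -
        have "distinct \<tau>" using dd unfolding \<tau>_def by simp
        moreover have "set \<tau> = {..<n} - {i}"
        proof -
          have "set (take q \<sigma> @ i # drop (Suc q) \<sigma>) = {..<n}" using dec st by (rule subst[where P="\<lambda>s. set s = {..<n}"])
          then show ?thesis using dd unfolding \<tau>_def by auto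
        qed
        ultimately show ?thesis unfolding Qs_def by simp
      qed
      moreover have "\<sigma> = ins i q \<tau>" by (rule trans[OF dec sym[OF e]])
      ultimately show "\<sigma> \<in> ?f ` (Qs n i \<times> {..<n})"
        using q by (auto intro!: image_eqI[where x="(\<tau>, q)"])
    qed
  qed
  have "(\<Sum>\<tau>\<in>Qs n i. \<Sum>q<n. h (ins i q \<tau>)) = (\<Sum>p\<in>Qs n i \<times> {..<n}. h (?f p))"
    by (subst sum.cartesian_product) (rule sum.cong, auto)
  also have "\<dots> = (\<Sum>\<sigma>\<in>orderings n. h \<sigma>)"
    using sum.reindex[OF inj, of h] img by simp
  finally show ?thesis by simp
qed

lemma ins_props:
  assumes "i < n" "\<tau> \<in> Qs n i" "q < n"
  shows "idx (ins i q \<tau>) i = q" "q \<le> length \<tau>"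
proof -
  have "length \<tau> = n - 1" using Qs_len assms by auto
  then show "q \<le> length \<tau>" using assms by simp
  moreover have "i \<notin> set \<tau>" using assms unfolding Qs_def by auto
  ultimately show "idx (ins i q \<tau>) i = q" using idx_ins by simp
qed

lemma cnt1:
  fixes u :: "nat \<Rightarrow> nat \<Rightarrow> real"
  assumes "i < n" "m < n"
  shows "(\<Sum>\<sigma>\<in>orderings n. if x \<in> avail_after u {..<n} (take (idx \<sigma> i) \<sigma>) then 1 else 0)
     \<ge> real (m + 1) * (\<Sum>\<tau>\<in>Qs n i. if x \<in> avail_after u {..<n} (take m \<tau>) then 1 else (0::real))"
proof -
  let ?g = "\<lambda>\<tau> k. if x \<in> avail_after u {..<n} (take k \<tau>) then 1 else (0::real)"
  have "(\<Sum>\<sigma>\<in>orderings n. if x \<in> avail_after u {..<n} (take (idx \<sigma> i) \<sigma>) then 1 else 0)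
      = (\<Sum>\<tau>\<in>Qs n i. \<Sum>q<n. ?g \<tau> q)"
    unfolding ord_split[OF assms(1)]
  proof (rule sum.cong[OF refl], rule sum.cong[OF refl])
    fix \<tau> q assume "\<tau> \<in> Qs n i" "q \<in> {..<n}"
    then have "idx (ins i q \<tau>) i = q" "q \<le> length \<tau>" using ins_props assms by auto
    then show "(if x \<in> avail_after u {..<n} (take (idx (ins i q \<tau>) i) (ins i q \<tau>)) then 1 else 0) = ?g \<tau> q"
      using take_ins[of q q \<tau> i] by simp
  qed
  also have "\<dots> \<ge> (\<Sum>\<tau>\<in>Qs n i. real (m + 1) * ?g \<tau> m)"
  proof (rule sum_mono)
    fix \<tau> assume "\<tau> \<in> Qs n i"
    have "(\<Sum>q<n. ?g \<tau> q) \<ge> (\<Sum>q<m+1. ?g \<tau> q)"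
      by (rule sum_mono2) (use assms in auto)
    moreover have "(\<Sum>q<m+1. ?g \<tau> q) \<ge> (\<Sum>q<m+1. ?g \<tau> m)"
    proof (rule sum_mono)
      fix q assume "q \<in> {..<m+1}"
      then have "avail_after u {..<n} (take m \<tau>) \<subseteq> avail_after u {..<n} (take q \<tau>)"
        by (intro avail_mono_take) auto
      then show "?g \<tau> m \<le> ?g \<tau> q" by auto
    qed
    ultimately show "(\<Sum>q<n. ?g \<tau> q) \<ge> real (m + 1) * ?g \<tau> m" by simp
  qed
  finally show ?thesis by (simp add: sum_distrib_left)
qed

lemma cnt2:
  fixes u :: "nat \<Rightarrow> nat \<Rightarrow> real"
  assumes "i < n" "m < n"
  shows "(\<Sum>\<sigma>\<in>orderings n. if m \<le> idx \<sigma> i \<and> x \<in> avail_after u {..<n} (take m \<sigma>) then 1 else 0)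
     \<le> real n * (\<Sum>\<tau>\<in>Qs n i. if x \<in> avail_after u {..<n} (take m \<tau>) then 1 else (0::real))"
proof -
  let ?g = "\<lambda>\<tau>. if x \<in> avail_after u {..<n} (take m \<tau>) then 1 else (0::real)"
  have "(\<Sum>\<sigma>\<in>orderings n. if m \<le> idx \<sigma> i \<and> x \<in> avail_after u {..<n} (take m \<sigma>) then 1 else 0)
      = (\<Sum>\<tau>\<in>Qs n i. \<Sum>q<n. if m \<le> q then ?g \<tau> else 0)"
    unfolding ord_split[OF assms(1)]
  proof (rule sum.cong[OF refl], rule sum.cong[OF refl])
    fix \<tau> q assume "\<tau> \<in> Qs n i" "q \<in> {..<n}"
    then have "idx (ins i q \<tau>) i = q" "q \<le> length \<tau>" using ins_props assms by auto
    then show "(if m \<le> idx (ins i q \<tau>) i \<and> x \<in> avail_after u {..<n} (take m (ins i q \<tau>)) then 1 else 0)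
       = (if m \<le> q then ?g \<tau> else 0)"
      using take_ins[of m q \<tau> i] by auto
  qed
  also have "\<dots> \<le> (\<Sum>\<tau>\<in>Qs n i. real n * ?g \<tau>)"
  proof (rule sum_mono)
    fix \<tau> assume "\<tau> \<in> Qs n i"
    have "(\<Sum>q<n. if m \<le> q then ?g \<tau> else 0) \<le> (\<Sum>q<n. ?g \<tau>)"
      by (rule sum_mono) auto
    then show "(\<Sum>q<n. if m \<le> q then ?g \<tau> else 0) \<le> real n * ?g \<tau>" by simp
  qed
  finally show ?thesis by (simp add: sum_distrib_left)
qed

lemma val_bounds: "u \<in> profiles n \<Longrightarrow> i < n \<Longrightarrow> j < n \<Longrightarrow> 0 \<le> u i j \<and> u i j \<le> 1"
  unfolding profiles_def valuation_def by auto

lemma avail_lt: "avail_after u {..<n} xs \<subseteq> {..<n}"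
  by (rule avail_sub)

lemma W1:
  assumes u: "u \<in> profiles n" and s: "\<sigma> \<in> orderings n" and mu: "\<mu> \<in> outcomes n"
  shows "welfare n u (RP n u \<sigma>) \<ge>
     (\<Sum>i<n. if \<mu> i \<in> avail_after u {..<n} (take (idx \<sigma> i) \<sigma>) then u i (\<mu> i) else 0)"
  unfolding welfare_def
proof (rule sum_mono)
  fix i assume i: "i \<in> {..<n}"
  let ?S = "avail_after u {..<n} (take (idx \<sigma> i) \<sigma>)"
  have r: "RP n u \<sigma> i \<in> ?S" "\<forall>y\<in>?S. u i y \<le> u i (RP n u \<sigma> i)" using rp_val[OF s, of i u] i by auto
  have "RP n u \<sigma> i < n" using r(1) avail_lt by blast
  then have "0 \<le> u i (RP n u \<sigma> i)" using val_bounds[OF u] i by auto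
  then show "(if \<mu> i \<in> ?S then u i (\<mu> i) else 0) \<le> u i (RP n u \<sigma> i)" using r(2) by auto
qed

lemma W_nonneg:
  assumes u: "u \<in> profiles n" and s: "\<sigma> \<in> orderings n" and i: "i < n"
  shows "0 \<le> u i (RP n u \<sigma> i)"
proof -
  let ?S = "avail_after u {..<n} (take (idx \<sigma> i) \<sigma>)"
  have "RP n u \<sigma> i \<in> ?S" using rp_val[OF s i, of u] by auto
  then have "RP n u \<sigma> i < n" using avail_lt by blast
  then show ?thesis using val_bounds[OF u] i by auto
qed

lemma W2:
  assumes u: "u \<in> profiles n" and s: "\<sigma> \<in> orderings n" and n: "n \<ge> 1"
  shows "welfare n u (RP n u \<sigma>) \<ge> 1"
proof -
  have len: "length \<sigma> = n" using ord_len[OF s] .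
  then obtain i0 rest where sig: "\<sigma> = i0 # rest" using n by (cases \<sigma>) auto
  have i0: "i0 < n" using s sig unfolding orderings_def by auto
  have idx0: "idx \<sigma> i0 = 0" using sig by simp
  have S: "avail_after u {..<n} (take (idx \<sigma> i0) \<sigma>) = {..<n}" using idx0 by simp
  obtain j where j: "j < n" "u i0 j = 1" using u i0 unfolding profiles_def valuation_def by auto
  have "\<forall>y\<in>{..<n}. u i0 y \<le> u i0 (RP n u \<sigma> i0)" using rp_val[OF s i0, of u] S by simp
  then have "u i0 j \<le> u i0 (RP n u \<sigma> i0)" using j(1) by blast
  then have "1 \<le> u i0 (RP n u \<sigma> i0)" using j by simp
  also have "\<dots> \<le> (\<Sum>i<n. u i (RP n u \<sigma> i))"
    by (rule member_le_sum) (use i0 W_nonneg[OF u s] in auto)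
  finally show ?thesis unfolding welfare_def .
qed

lemma W3:
  assumes u: "u \<in> profiles n" and s: "\<sigma> \<in> orderings n" and mu: "\<mu> \<in> outcomes n"
  shows "(\<Sum>i<n. if m \<le> idx \<sigma> i \<and> \<mu> i \<in> avail_after u {..<n} (take m \<sigma>) then u i (\<mu> i) else 0)
     \<ge> (\<Sum>i<n. u i (\<mu> i)) - 2 * real m"
proof -
  let ?A = "avail_after u {..<n} (take m \<sigma>)"
  let ?C = "\<lambda>i. m \<le> idx \<sigma> i \<and> \<mu> i \<in> ?A"
  have bij: "bij_betw \<mu> {..<n} {..<n}" using mu unfolding outcomes_def by simp
  have mun: "\<And>i. i < n \<Longrightarrow> \<mu> i < n" using bij by (meson bij_betwE lessThan_iff)
  have inj: "inj_on \<mu> {..<n}" using bij bij_betw_def by blast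
  have w: "\<And>i. i < n \<Longrightarrow> 0 \<le> u i (\<mu> i) \<and> u i (\<mu> i) \<le> 1" using val_bounds[OF u] mun by blast
  have split: "(\<Sum>i<n. u i (\<mu> i)) = (\<Sum>i<n. if ?C i then u i (\<mu> i) else 0) + (\<Sum>i<n. if ?C i then 0 else u i (\<mu> i))"
    by (subst sum.distrib[symmetric]) (rule sum.cong, auto)
  have "(\<Sum>i<n. if ?C i then 0 else u i (\<mu> i)) \<le> (\<Sum>i<n. if ?C i then 0 else (1::real))"
    by (rule sum_mono) (use w in auto)
  also have "\<dots> = real (card {i\<in>{..<n}. \<not> ?C i})"
    by (simp add: sum.If_cases) (rule arg_cong[where f=card], auto)
  also have "\<dots> \<le> 2 * real m"
  proof -
    have sub: "{i\<in>{..<n}. \<not> ?C i} \<subseteq> set (take m \<sigma>) \<union> {i\<in>{..<n}. \<mu> i \<in> {..<n} - ?A}"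
    proof
      fix i assume "i \<in> {i\<in>{..<n}. \<not> ?C i}"
      then have i: "i < n" "\<not> ?C i" by auto
      show "i \<in> set (take m \<sigma>) \<union> {i\<in>{..<n}. \<mu> i \<in> {..<n} - ?A}"
      proof (cases "m \<le> idx \<sigma> i")
        case True
        then show ?thesis using i mun by auto
      next
        case False
        have iin: "i \<in> set \<sigma>" using s i unfolding orderings_def by auto
        have "take m \<sigma> ! idx \<sigma> i = i" using False nth_idx[OF iin] by simp
        moreover have "idx \<sigma> i < length (take m \<sigma>)" using False idx_less[OF iin] by simp
        ultimately have "i \<in> set (take m \<sigma>)" by (metis nth_mem)
        then show ?thesis by simp
      qed
    qed
    have c1: "card (set (take m \<sigma>)) \<le> m" using card_length[of "take m \<sigma>"] by simp
    have c2: "card {i\<in>{..<n}. \<mu> i \<in> {..<n} - ?A} \<le> card ({..<n} - ?A)"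
    proof (rule card_inj_on_le)
      show "inj_on \<mu> {i\<in>{..<n}. \<mu> i \<in> {..<n} - ?A}" using inj by (rule inj_on_subset) auto
    qed auto
    have "card ?A + length (take m \<sigma>) \<ge> n" using avail_card[of "{..<n}" u "take m \<sigma>"] by simp
    then have c3: "card ({..<n} - ?A) \<le> m"
      using card_Diff_subset[OF finite_subset[OF avail_lt[of u n "take m \<sigma>"]] avail_lt[of u n "take m \<sigma>"]] by auto
    have "card {i\<in>{..<n}. \<not> ?C i} \<le> card (set (take m \<sigma>) \<union> {i\<in>{..<n}. \<mu> i \<in> {..<n} - ?A})"
      by (rule card_mono[OF _ sub]) auto
    also have "\<dots> \<le> card (set (take m \<sigma>)) + card {i\<in>{..<n}. \<mu> i \<in> {..<n} - ?A}"
      by (rule card_Un_le)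
    finally show ?thesis using c1 c2 c3 by linarith
  qed
  finally show ?thesis using split by linarith
qed

lemma main_ineq:
  assumes u: "u \<in> profiles n" and mu: "\<mu> \<in> outcomes n" and m: "m < n"
  shows "real n * (\<Sum>\<sigma>\<in>orderings n. welfare n u (RP n u \<sigma>))
     \<ge> real (m + 1) * (real (card (orderings n)) * ((\<Sum>i<n. u i (\<mu> i)) - 2 * real m))"
proof -
  define w where "w i = u i (\<mu> i)" for i
  have bij: "bij_betw \<mu> {..<n} {..<n}" using mu unfolding outcomes_def by simp
  have mun: "\<And>i. i < n \<Longrightarrow> \<mu> i < n" using bij by (meson bij_betwE lessThan_iff)
  have w0: "0 \<le> w i" if i: "i < n" for i
  proof -
    have "\<mu> i < n" using mun i .
    then show ?thesis unfolding w_def using val_bounds[OF u i] by blast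
  qed
  define G where "G i \<sigma> = (if \<mu> i \<in> avail_after u {..<n} (take (idx \<sigma> i) \<sigma>) then 1 else (0::real))" for i \<sigma>
  define C where "C i \<sigma> = (if m \<le> idx \<sigma> i \<and> \<mu> i \<in> avail_after u {..<n} (take m \<sigma>) then 1 else (0::real))" for i \<sigma>
  define X where "X i = (\<Sum>\<tau>\<in>Qs n i. if \<mu> i \<in> avail_after u {..<n} (take m \<tau>) then 1 else (0::real))" for i
  have c1: "\<And>i. i < n \<Longrightarrow> real (m + 1) * X i \<le> (\<Sum>\<sigma>\<in>orderings n. G i \<sigma>)"
    unfolding G_def X_def using cnt1 m by blast
  have c2: "\<And>i. i < n \<Longrightarrow> (\<Sum>\<sigma>\<in>orderings n. C i \<sigma>) \<le> real n * X i"
    unfolding C_def X_def using cnt2 m by blast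
  have e1: "\<And>\<sigma>. (\<Sum>i<n. w i * G i \<sigma>) = (\<Sum>i<n. if \<mu> i \<in> avail_after u {..<n} (take (idx \<sigma> i) \<sigma>) then u i (\<mu> i) else 0)"
    by (rule sum.cong) (auto simp: w_def G_def)
  have "(\<Sum>i<n. w i * (\<Sum>\<sigma>\<in>orderings n. G i \<sigma>)) = (\<Sum>\<sigma>\<in>orderings n. \<Sum>i<n. w i * G i \<sigma>)"
    by (subst sum.swap) (simp add: sum_distrib_left)
  also have "\<dots> \<le> (\<Sum>\<sigma>\<in>orderings n. welfare n u (RP n u \<sigma>))"
    by (rule sum_mono) (use W1[OF u _ mu] e1 in auto)
  finally have s1: "(\<Sum>i<n. w i * (\<Sum>\<sigma>\<in>orderings n. G i \<sigma>)) \<le> (\<Sum>\<sigma>\<in>orderings n. welfare n u (RP n u \<sigma>))" .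
  have e2: "\<And>\<sigma>. (\<Sum>i<n. w i * C i \<sigma>) = (\<Sum>i<n. if m \<le> idx \<sigma> i \<and> \<mu> i \<in> avail_after u {..<n} (take m \<sigma>) then u i (\<mu> i) else 0)"
    by (rule sum.cong) (auto simp: w_def C_def)
  have "real (m + 1) * (real (card (orderings n)) * ((\<Sum>i<n. u i (\<mu> i)) - 2 * real m))
      = real (m + 1) * (\<Sum>\<sigma>\<in>orderings n. (\<Sum>i<n. u i (\<mu> i)) - 2 * real m)" by simp
  also have "\<dots> \<le> real (m + 1) * (\<Sum>\<sigma>\<in>orderings n. \<Sum>i<n. w i * C i \<sigma>)"
  proof (rule mult_left_mono)
    show "(\<Sum>\<sigma>\<in>orderings n. (\<Sum>i<n. u i (\<mu> i)) - 2 * real m) \<le> (\<Sum>\<sigma>\<in>orderings n. \<Sum>i<n. w i * C i \<sigma>)"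
      by (rule sum_mono) (use W3[OF u _ mu] e2 in auto)
  qed simp
  also have "\<dots> = (\<Sum>i<n. w i * (real (m + 1) * (\<Sum>\<sigma>\<in>orderings n. C i \<sigma>)))"
    by (subst sum.swap) (simp add: sum_distrib_left mult.left_commute)
  also have "\<dots> \<le> (\<Sum>i<n. w i * (real n * (\<Sum>\<sigma>\<in>orderings n. G i \<sigma>)))"
  proof (rule sum_mono)
    fix i assume i: "i \<in> {..<n}"
    have "real (m + 1) * (\<Sum>\<sigma>\<in>orderings n. C i \<sigma>) \<le> real (m + 1) * (real n * X i)"
      using c2 i by (intro mult_left_mono) auto
    also have "\<dots> = real n * (real (m + 1) * X i)" by simp
    also have "\<dots> \<le> real n * (\<Sum>\<sigma>\<in>orderings n. G i \<sigma>)"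
      using c1 i by (intro mult_left_mono) auto
    finally show "w i * (real (m + 1) * (\<Sum>\<sigma>\<in>orderings n. C i \<sigma>)) \<le> w i * (real n * (\<Sum>\<sigma>\<in>orderings n. G i \<sigma>))"
      using w0 i by (intro mult_left_mono) auto
  qed
  also have "\<dots> = real n * (\<Sum>i<n. w i * (\<Sum>\<sigma>\<in>orderings n. G i \<sigma>))"
    by (simp add: sum_distrib_left mult.left_commute)
  also have "\<dots> \<le> real n * (\<Sum>\<sigma>\<in>orderings n. welfare n u (RP n u \<sigma>))"
    using s1 by (intro mult_left_mono) auto
  finally show ?thesis .
qed

lemma orderings_fin: "finite (orderings n)"
proof -
  have "orderings n \<subseteq> {xs. set xs \<subseteq> {..<n} \<and> distinct xs}" unfolding orderings_def by auto
  then show ?thesis using finite_subset_distinct[of "{..<n}"] finite_subset by blast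
qed

lemma orderings_ne: "[0..<n] \<in> orderings n"
  unfolding orderings_def by auto

lemma card_ord_pos: "card (orderings n) > 0"
  using orderings_fin orderings_ne card_gt_0_iff by blast

lemma outcomes_welfare_fin: "finite (welfare n u ` outcomes n)"
proof -
  let ?g = "\<lambda>xs. (\<Sum>i<n. u i (xs ! i))"
  have "welfare n u ` outcomes n \<subseteq> ?g ` {xs. set xs \<subseteq> {..<n} \<and> length xs = n}"
  proof
    fix y assume "y \<in> welfare n u ` outcomes n"
    then obtain \<mu> where mu: "\<mu> \<in> outcomes n" and y: "y = welfare n u \<mu>" by auto
    have bij: "bij_betw \<mu> {..<n} {..<n}" using mu unfolding outcomes_def by simp
    have "set (map \<mu> [0..<n]) \<subseteq> {..<n}" using bij by (auto dest: bij_betwE)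
    then have mem: "map \<mu> [0..<n] \<in> {xs. set xs \<subseteq> {..<n} \<and> length xs = n}" by simp
    have yeq: "y = ?g (map \<mu> [0..<n])" unfolding y welfare_def by (rule sum.cong) auto
    show "y \<in> ?g ` {xs. set xs \<subseteq> {..<n} \<and> length xs = n}" by (rule image_eqI[where f="?g", OF yeq mem])
  qed
  moreover have "finite {xs. set xs \<subseteq> {..<n} \<and> length xs = (n::nat)}"
    using finite_lists_length_eq[of "{..<n}" n] by simp
  ultimately show ?thesis by (meson finite_imageI finite_subset)
qed

lemma id_outcome: "id \<in> outcomes n"
  unfolding outcomes_def by simp

lemma opt_ge1:
  assumes u: "u \<in> profiles n" and n: "n \<ge> 1"
  shows "opt_welfare n u \<ge> 1"
proof -
  obtain j where j: "j < n" "u 0 j = 1" using u n unfolding profiles_def valuation_def by fastforce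
  define \<mu> where "\<mu> = id(0 := j, j := 0)"
  have "\<mu> \<in> outcomes n"
  proof -
    have "inj_on \<mu> {..<n}" unfolding \<mu>_def inj_on_def by auto
    moreover have "\<mu> ` {..<n} = {..<n}"
    proof
      show "\<mu> ` {..<n} \<subseteq> {..<n}" using j n unfolding \<mu>_def by auto
      show "{..<n} \<subseteq> \<mu> ` {..<n}"
      proof
        fix x assume x: "x \<in> {..<n}"
        have "\<mu> (\<mu> x) = x" unfolding \<mu>_def by auto
        moreover have "\<mu> x \<in> {..<n}" using x j n unfolding \<mu>_def by auto
        ultimately show "x \<in> \<mu> ` {..<n}" by (metis image_eqI)
      qed
    qed
    ultimately show ?thesis unfolding outcomes_def bij_betw_def by simp
  qed
  have mu_lt: "\<And>i. i < n \<Longrightarrow> \<mu> i < n" using j n unfolding \<mu>_def by auto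
  have "1 = u 0 (\<mu> 0)" using j unfolding \<mu>_def by auto
  also have "\<dots> \<le> welfare n u \<mu>" unfolding welfare_def
    by (rule member_le_sum) (use n val_bounds[OF u] mu_lt in auto)
  also have "\<dots> \<le> opt_welfare n u" unfolding opt_welfare_def
    using outcomes_welfare_fin \<open>\<mu> \<in> outcomes n\<close> by (intro Max_ge) auto
  finally show ?thesis .
qed

lemma exists_m: "n \<ge> 1 \<Longrightarrow> \<exists>m<n. real m \<le> sqrt (real n) \<and> sqrt (real n) \<le> real m + 1"
proof -
  assume n: "n \<ge> 1"
  show ?thesis
  proof (cases "n = 1")
    case True then show ?thesis by (intro exI[of _ 0]) auto
  next
    case False
    then have n2: "n \<ge> 2" using n by auto
    define m where "m = nat \<lfloor>sqrt (real n)\<rfloor>"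
    have m1: "real m \<le> sqrt (real n)" unfolding m_def by simp
    have m2: "sqrt (real n) \<le> real m + 1" unfolding m_def
      using real_of_int_floor_add_one_ge[of "sqrt (real n)"] by simp
    have "sqrt (real n) < real n"
    proof -
      have "1 < sqrt (real n)" using n2 by simp
      then have "sqrt (real n) * 1 < sqrt (real n) * sqrt (real n)" by (intro mult_strict_left_mono) auto
      then show ?thesis by simp
    qed
    then have "m < n" using m1 by linarith
    then show ?thesis using m1 m2 by blast
  qed
qed

lemma bound_per_u:
  assumes u: "u \<in> profiles n" and n: "n \<ge> 1"
  shows "opt_welfare n u \<le> 3 * sqrt (real n) * RP_expected_welfare n u"
proof -
  define N where "N = real (card (orderings n))"
  define S where "S = (\<Sum>\<sigma>\<in>orderings n. welfare n u (RP n u \<sigma>))"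
  define E where "E = S / N"
  have Npos: "N > 0" unfolding N_def using card_ord_pos by simp
  have E_def': "RP_expected_welfare n u = E" unfolding E_def S_def N_def RP_expected_welfare_def ..
  have "N \<le> S" unfolding N_def S_def
    using sum_mono[of "orderings n" "\<lambda>_. 1::real" "\<lambda>\<sigma>. welfare n u (RP n u \<sigma>)"] W2[OF u _ n] by auto
  then have E1: "E \<ge> 1" unfolding E_def using Npos by simp
  obtain m where m: "m < n" "real m \<le> sqrt (real n)" "sqrt (real n) \<le> real m + 1"
    using exists_m[OF n] by blast
  have sq: "sqrt (real n) * sqrt (real n) = real n" by simp
  have sqpos: "sqrt (real n) \<ge> 1" using n by simp
  have "welfare n u \<mu> \<le> 3 * sqrt (real n) * E" if mu: "\<mu> \<in> outcomes n" for \<mu>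
  proof -
    have mi: "real n * S \<ge> real (m + 1) * (N * (welfare n u \<mu> - 2 * real m))"
      using main_ineq[OF u mu m(1)] unfolding S_def N_def welfare_def by simp
    have "real n * E \<ge> real (m + 1) * (welfare n u \<mu> - 2 * real m)"
    proof -
      have "real (m + 1) * (welfare n u \<mu> - 2 * real m) \<le> real n * S / N"
        using mi Npos by (simp add: pos_le_divide_eq mult.commute mult.left_commute)
      then show ?thesis unfolding E_def by simp
    qed
    moreover have "real n * E \<le> real (m + 1) * (sqrt (real n) * E)"
    proof -
      have "real n \<le> (real m + 1) * sqrt (real n)"
        using mult_right_mono[OF m(3), of "sqrt (real n)"] sq by simp
      then show ?thesis using E1 mult_right_mono[of "real n" "(real m + 1) * sqrt (real n)" E] by (simp add: algebra_simps)
    qed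
    ultimately have "real (m + 1) * (welfare n u \<mu> - 2 * real m) \<le> real (m + 1) * (sqrt (real n) * E)" by linarith
    then have "welfare n u \<mu> - 2 * real m \<le> sqrt (real n) * E"
      by (rule mult_left_le_imp_le) simp
    moreover have "2 * real m \<le> 2 * sqrt (real n) * E"
    proof -
      have "2 * real m \<le> 2 * sqrt (real n)" using m(2) by simp
      also have "\<dots> \<le> 2 * sqrt (real n) * E" using E1 sqpos by simp
      finally show ?thesis .
    qed
    ultimately show ?thesis by linarith
  qed
  then have "opt_welfare n u \<le> 3 * sqrt (real n) * E"
    unfolding opt_welfare_def using outcomes_welfare_fin[of n u] id_outcome[of n]
    by (subst Max_le_iff) auto
  then show ?thesis using E_def' by simp
qed

lemma profiles_ne: "(\<lambda>i j. 1 / (real j + 1)) \<in> profiles n"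
  unfolding profiles_def valuation_def inj_on_def by (auto simp: field_simps)

theorem corollary1:
  shows "\<exists>c::real. c > 0 \<and> (\<forall>n::nat. n \<ge> 1 \<longrightarrow> approx_ratio_RP n \<ge> c / sqrt (real n))"
proof (intro exI[of _ "1/3"] conjI allI impI)
  fix n :: nat assume n: "n \<ge> 1"
  show "approx_ratio_RP n \<ge> (1/3) / sqrt (real n)"
    unfolding approx_ratio_RP_def
  proof (rule cINF_greatest)
    show "profiles n \<noteq> {}" using profiles_ne by blast
  next
    fix u assume u: "u \<in> profiles n"
    have o: "opt_welfare n u \<ge> 1" using opt_ge1[OF u n] .
    have b: "opt_welfare n u \<le> 3 * sqrt (real n) * RP_expected_welfare n u" using bound_per_u[OF u n] .
    have sp: "sqrt (real n) > 0" using n by simp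
    show "(1/3) / sqrt (real n) \<le> RP_expected_welfare n u / opt_welfare n u"
      using o b sp by (simp add: field_simps)
  qed
qed (simp)

end
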